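(* Let $P,X,Y\in\Sigma^*$ and $A=PX$, $B=PY$. Then $\mathrm{MCS}(A,B)=\{PZ : Z\in\mathrm{MCS}(X,Y)\}$.
   Context: $\mathrm{MCS}(A,B)$ denotes the set of minimal common supersequences of $A$ and $B$: strings $C$ with $A$ and $B$ both (not necessarily contiguous) subsequences of $C$, such that no proper subsequence of $C$ has this property. $PX$ denotes concatenation. *)

theory Defs
  imports Main "HOL-Library.Sublist"
begin

definition common_superseq :: "'a list \<Rightarrow> 'a list \<Rightarrow> 'a list \<Rightarrow> bool" where
  "common_superseq A B C \<longleftrightarrow> subseq A C \<and> subseq B C"

definition MCS :: "'a list \<Rightarrow> 'a list \<Rightarrow> 'a list set" where
  "MCS A B = {C. common_superseq A B C \<and>
                 (\<forall>D. strict_subseq D C \<longrightarrow> \<not> common_superseq A B D)}"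

end

theory Submission
  imports Defs
begin

lemma MCS_Cons_head:
  assumes "C \<in> MCS (a#X) (a#Y)"
  shows "\<exists>C'. C = a # C'"
proof -
  from assms have cs: "subseq (a#X) C" "subseq (a#Y) C"
    and mn: "\<And>D. strict_subseq D C \<Longrightarrow> \<not> common_superseq (a#X) (a#Y) D"
    by (auto simp: MCS_def common_superseq_def)
  obtain c C' where C: "C = c # C'" using cs(1) by (cases C) auto
  show ?thesis
  proof (cases "c = a")
    case True then show ?thesis using C by blast
  next
    case False
    then have "subseq (a#X) C'" "subseq (a#Y) C'" using cs C by auto
    moreover have "strict_subseq C' C" using C
      by (auto simp: strict_subseq_def)
    ultimately show ?thesis using mn by (auto simp: common_superseq_def)
  qed
qed

lemma MCS_Cons_iff:
  "(a # C' \<in> MCS (a#X) (a#Y)) = (C' \<in> MCS X Y)"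
proof
  assume h: "a # C' \<in> MCS (a#X) (a#Y)"
  then have cs: "subseq X C'" "subseq Y C'"
    and mn: "\<And>D. strict_subseq D (a#C') \<Longrightarrow> \<not> common_superseq (a#X) (a#Y) D"
    by (auto simp: MCS_def common_superseq_def)
  show "C' \<in> MCS X Y"
    unfolding MCS_def common_superseq_def
  proof (intro CollectI conjI allI impI cs)
    fix D assume "strict_subseq D C'"
    then have "strict_subseq (a#D) (a#C')" by (auto simp: strict_subseq_def)
    from mn[OF this] show "\<not> (subseq X D \<and> subseq Y D)"
      by (auto simp: common_superseq_def)
  qed
next
  assume h: "C' \<in> MCS X Y"
  then have cs: "subseq X C'" "subseq Y C'"
    and mn: "\<And>D. strict_subseq D C' \<Longrightarrow> \<not> common_superseq X Y D"
    by (auto simp: MCS_def common_superseq_def)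
  show "a # C' \<in> MCS (a#X) (a#Y)"
    unfolding MCS_def
  proof (intro CollectI conjI allI impI)
    show "common_superseq (a # X) (a # Y) (a # C')"
      using cs by (auto simp: common_superseq_def)
  next
    fix D assume sD: "strict_subseq D (a#C')"
    show "\<not> common_superseq (a # X) (a # Y) D"
    proof
      assume c: "common_superseq (a # X) (a # Y) D"
      then obtain d D' where D: "D = d # D'"
        by (cases D) (auto simp: common_superseq_def)
      show False
      proof (cases "d = a")
        case True
        with sD D have "strict_subseq D' C'" by (auto simp: strict_subseq_def)
        moreover have "common_superseq X Y D'" using c D True
          by (auto simp: common_superseq_def)
        ultimately show False using mn by metis
      next
        case False
        have s1: "subseq (d#D') C'" using sD D False by (simp add: strict_subseq_def)
        have s2: "subseq D' C'" using subseq_Cons'[OF s1] .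
        have ne: "D' \<noteq> C'" using list_emb_length[OF s1] by auto
        have x1: "subseq (a#X) D'" "subseq (a#Y) D'" using c D False
          by (simp_all add: common_superseq_def)
        have cc: "common_superseq X Y D'"
          using subseq_Cons'[OF x1(1)] subseq_Cons'[OF x1(2)] unfolding common_superseq_def by simp
        have "strict_subseq D' C'" using s2 ne by (simp add: strict_subseq_def)
        from mn[OF this] cc show False by simp
      qed
    qed
  qed
qed

lemma MCS_Cons:
  "MCS (a#X) (a#Y) = {a # Z | Z. Z \<in> MCS X Y}"
proof
  show "MCS (a#X) (a#Y) \<subseteq> {a # Z | Z. Z \<in> MCS X Y}"
  proof
    fix C assume hC: "C \<in> MCS (a#X) (a#Y)"
    obtain C' where "C = a # C'" using MCS_Cons_head[OF hC] by blast
    with hC MCS_Cons_iff[of a C' X Y] show "C \<in> {a # Z | Z. Z \<in> MCS X Y}" by simp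
  qed
next
  show "{a # Z | Z. Z \<in> MCS X Y} \<subseteq> MCS (a#X) (a#Y)"
    using MCS_Cons_iff[of a _ X Y] by auto
qed

lemma MCS_prefix: "MCS (P @ X) (P @ Y) = {P @ Z | Z. Z \<in> MCS X Y}"
proof (induction P)
  case Nil then show ?case by simp
next
  case (Cons a P)
  have "MCS ((a # P) @ X) ((a # P) @ Y) = {a # Z | Z. Z \<in> MCS (P @ X) (P @ Y)}"
    using MCS_Cons[of a "P @ X" "P @ Y"] by simp
  also have "\<dots> = {a # Z | Z. Z \<in> {P @ Z | Z. Z \<in> MCS X Y}}" using Cons.IH by simp
  also have "\<dots> = {(a # P) @ Z | Z. Z \<in> MCS X Y}" by auto
  finally show ?case .
qed

theorem mainTheorem7:
  fixes P X Y A B :: "'a list"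
  assumes "A = P @ X" and "B = P @ Y"
  shows "MCS A B = {P @ Z | Z. Z \<in> MCS X Y}"
  using assms MCS_prefix by simp

end
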